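(* Let $\Omega$ be a measurable space with reference measure $\mathrm{d}\mathbf{y}$, let $q$ be a probability density on $\Omega$, and let $f_{\bm{\theta}}:\Omega\to\mathbb{R}$ for $\bm{\theta}\in\Theta$. Fix $\bm{\theta}\in\Theta$, $\nu\in\mathbb{R}$ and data $\mathcal{S}=\{\mathbf{y}_1,\ldots,\mathbf{y}_n\}\subset\Omega$, and assume $f_{\bm{\theta}}(\mathbf{y})-\log q(\mathbf{y})\le C(\bm{\theta})$ for all $\mathbf{y}\in\Omega$, for some constant $C(\bm{\theta})$. Let $\bm{r}_1,\bm{r}_2,\ldots$ be IID with density $q$, and define $$\mathcal{R}^m(\bm{\theta},\nu)=\sum_{i=1}^n\log\left[\frac{n\exp\{f_{\bm{\theta}}(\mathbf{y}_i)+\nu\}}{n\exp\{f_{\bm{\theta}}(\mathbf{y}_i)+\nu\}+mq(\mathbf{y}_i)}\right]+\sum_{j=1}^m\log\left[\frac{mq(\bm{r}_j)}{n\exp\{f_{\bm{\theta}}(\bm{r}_j)+\nu\}+mq(\bm{r}_j)}\right],$$ $$\mathcal{M}(\bm{\theta},\nu)=\sum_{i=1}^n\{f_{\bm{\theta}}(\mathbf{y}_i)+\nu\}-n\int_\Omega\exp\{f_{\bm{\theta}}(\mathbf{y})+\nu\}\,\mathrm{d}\mathbf{y}.$$ Then $$\mathcal{R}^m(\bm{\theta},\nu)+n\log(m/n)+\sum_{i=1}^n\log q(\mathbf{y}_i)\to\mathcal{M}(\bm{\theta},\nu)$$ almost surely as $m\to+\infty$, with respect to the randomness of the reference points $\b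m{r}_1,\ldots,\bm{r}_m$.
   Context: $\mathcal{R}^m$ is the log-likelihood of the logistic regression (noise-contrastive divergence) that classifies the data points (label 1) against the $m$ reference points (label 0) with log-odds $f_{\bm{\theta}}(\mathbf{u})+\nu-\log q(\mathbf{u})+\log(n/m)$. *)

theory Defs
  imports "HOL-Probability.Probability"
begin

definition nce_R :: "('a \<Rightarrow> real) \<Rightarrow> ('a \<Rightarrow> real) \<Rightarrow> real \<Rightarrow> nat \<Rightarrow> (nat \<Rightarrow> 'a) \<Rightarrow> nat \<Rightarrow> (nat \<Rightarrow> 'a) \<Rightarrow> real" where
  "nce_R f q \<nu> n y m r =
     (\<Sum>i<n. ln (real n * exp (f (y i) + \<nu>) / (real n * exp (f (y i) + \<nu>) + real m * q (y i))))
   + (\<Sum>j<m. ln (real m * q (r j) / (real n * exp (f (r j) + \<nu>) + real m * q (r j))))"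

definition mle_M :: "'a measure \<Rightarrow> ('a \<Rightarrow> real) \<Rightarrow> real \<Rightarrow> nat \<Rightarrow> (nat \<Rightarrow> 'a) \<Rightarrow> real" where
  "mle_M M f \<nu> n y =
     (\<Sum>i<n. f (y i) + \<nu>) - real n * (\<integral>x. exp (f x + \<nu>) \<partial>M)"

end

theory Submission
  imports Defs "HOL-Real_Asymp.Real_Asymp"
begin

lemma slln_bounded:
  fixes X :: "nat \<Rightarrow> 'w \<Rightarrow> real"
  assumes P: "prob_space P" and ind: "prob_space.indep_vars P (\<lambda>_. borel) X UNIV"
    and bnd: "\<And>j \<omega>. \<omega> \<in> space P \<Longrightarrow> X j \<omega> \<in> {0..K}" and K: "K > 0"
    and ex: "\<And>j. prob_space.expectation P (X j) = \<mu>"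
  shows "AE \<omega> in P. (\<lambda>m. (\<Sum>j<m. X j \<omega>) / real m) \<longlonglongrightarrow> \<mu>"
proof -
  interpret prob_space P by (rule P)
  have meas[measurable]: "X j \<in> borel_measurable P" for j
    using ind unfolding indep_vars_def by blast
  have ev: "AE \<omega> in P. eventually (\<lambda>m. \<omega> \<in> space P - {\<omega>\<in>space P. \<bar>(\<Sum>j<m. X j \<omega>) - real m * \<mu>\<bar> \<ge> real m * \<epsilon>}) sequentially"
    if e: "\<epsilon> > 0" for \<epsilon>
  proof (rule borel_cantelli_AE1)
    define A where "A m = {\<omega>\<in>space P. \<bar>(\<Sum>j<m. X j \<omega>) - real m * \<mu>\<bar> \<ge> real m * \<epsilon>}" for m
    show "{\<omega>\<in>space P. \<bar>(\<Sum>j<m. X j \<omega>) - real m * \<mu>\<bar> \<ge> real m * \<epsilon>} \<in> sets P" for m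
      by measurable
    show "emeasure P {\<omega>\<in>space P. \<bar>(\<Sum>j<m. X j \<omega>) - real m * \<mu>\<bar> \<ge> real m * \<epsilon>} < \<infinity>" for m
      by (simp add: less_top[symmetric])
    have b: "prob (A m) \<le> 2 * exp (-2 * \<epsilon>^2 / K^2) ^ m" for m
    proof (cases "m = 0")
      case True
      have "prob (A m) \<le> 2" using prob_le_1[of "A m"] by linarith
      then show ?thesis using True by simp
    next
      case False
      interpret H: Hoeffding_ineq P "{..<m}" X "\<lambda>_. 0" "\<lambda>_. K" "real m * \<mu>"
      proof unfold_locales
        show "indep_vars (\<lambda>_. borel) X {..<m}"
          by (rule indep_vars_subset[OF ind]) auto
        show "AE x in P. X i x \<in> {0..K}" for i using bnd by (intro AE_I2) auto
        show "real m * \<mu> \<equiv> (\<Sum>i<m. expectation (X i))" by (simp add: ex)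
      qed auto
      have "prob {x\<in>space P. \<bar>(\<Sum>i\<in>{..<m}. X i x) - real m * \<mu>\<bar> \<ge> real m * \<epsilon>}
          \<le> 2 * exp (-2 * (real m * \<epsilon>)\<^sup>2 / (\<Sum>i\<in>{..<m}. (K - 0)\<^sup>2))"
        using False K e by (intro H.Hoeffding_ineq_abs_ge) auto
      also have "-2 * (real m * \<epsilon>)\<^sup>2 / (\<Sum>i\<in>{..<m}. (K - 0)\<^sup>2) = real m * (-2 * \<epsilon>^2 / K^2)"
        using False K by (simp add: power2_eq_square field_simps)
      finally show ?thesis unfolding A_def exp_of_nat_mult by simp
    qed
    have "summable (\<lambda>m. 2 * exp (-2 * \<epsilon>^2 / K^2) ^ m)"
      using e K by (intro summable_mult summable_geometric) simp
    then show "summable (\<lambda>m. measure P {\<omega>\<in>space P. \<bar>(\<Sum>j<m. X j \<omega>) - real m * \<mu>\<bar> \<ge> real m * \<epsilon>})"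
      by (rule summable_comparison_test[rotated]) (use b in \<open>auto simp: A_def\<close>)
  qed
  have "AE \<omega> in P. \<forall>k::nat. eventually (\<lambda>m. \<omega> \<in> space P - {\<omega>\<in>space P. \<bar>(\<Sum>j<m. X j \<omega>) - real m * \<mu>\<bar> \<ge> real m * (1 / Suc k)}) sequentially"
    by (subst AE_all_countable) (intro allI ev, simp)
  then show ?thesis
  proof (rule AE_mp, intro AE_I2 impI)
    fix \<omega> assume H: "\<forall>k::nat. eventually (\<lambda>m. \<omega> \<in> space P - {\<omega>\<in>space P. \<bar>(\<Sum>j<m. X j \<omega>) - real m * \<mu>\<bar> \<ge> real m * (1 / Suc k)}) sequentially"
    show "(\<lambda>m. (\<Sum>j<m. X j \<omega>) / real m) \<longlonglongrightarrow> \<mu>"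
      unfolding tendsto_iff
    proof (intro allI impI)
      fix e :: real assume e: "e > 0"
      obtain k :: nat where k: "1 / Suc k < e" using e
        by (metis nat_approx_posE)
      show "\<forall>\<^sub>F m in sequentially. dist ((\<Sum>j<m. X j \<omega>) / real m) \<mu> < e"
        using H[rule_format, of k] eventually_gt_at_top[of 0]
      proof eventually_elim
        case (elim m)
        then have "\<bar>(\<Sum>j<m. X j \<omega>) - real m * \<mu>\<bar> < real m * (1 / Suc k)" by auto
        then have "\<bar>(\<Sum>j<m. X j \<omega>) / real m - \<mu>\<bar> < 1 / Suc k"
          using elim by (simp add: field_simps abs_divide[symmetric] del: of_nat_Suc)
        then show ?case using k by (simp add: dist_real_def)
      qed
    qed
  qed
qed

lemma det_ln_sum:
  fixes G :: "nat \<Rightarrow> real" and c K \<mu> :: real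
  assumes G0: "\<And>j. 0 \<le> G j" and GK: "\<And>j. G j \<le> K" and c: "c \<ge> 0"
    and lim: "(\<lambda>m. (\<Sum>j<m. G j) / real m) \<longlonglongrightarrow> \<mu>"
  shows "(\<lambda>m. \<Sum>j<m. ln (1 + c * G j / real m)) \<longlonglongrightarrow> c * \<mu>"
proof -
  define D where "D m = (\<Sum>j<m. ln (1 + c * G j / real m)) - c * ((\<Sum>j<m. G j) / real m)" for m
  have K0: "K \<ge> 0" using G0[of 0] GK[of 0] by linarith
  have "D \<longlonglongrightarrow> 0"
  proof (rule Lim_null_comparison)
    show "(\<lambda>m. (c * K)^2 / real m) \<longlonglongrightarrow> 0" by real_asymp
    obtain N :: nat where N: "c * K \<le> real N" using real_arch_simple by blast
    show "\<forall>\<^sub>F m in sequentially. norm (D m) \<le> (c * K)^2 / real m"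
      using eventually_ge_at_top[of "max 1 N"]
    proof eventually_elim
      case (elim m)
      then have m: "real m \<ge> 1" "c * K \<le> real m" using N by auto
      have x: "0 \<le> c * G j / real m" "c * G j / real m \<le> c * K / real m" for j
        using G0[of j] GK[of j] c m by (auto intro!: divide_right_mono mult_left_mono)
      have cm: "c * K / real m \<le> 1" using m by simp
      have bd: "\<bar>ln (1 + c * G j / real m) - c * G j / real m\<bar> \<le> (c * K / real m)^2" for j
      proof -
        have a: "c * G j / real m - (c * G j / real m)^2 \<le> ln (1 + c * G j / real m)"
          using x[of j] cm by (intro ln_one_plus_pos_lower_bound) auto
        have b: "ln (1 + c * G j / real m) \<le> c * G j / real m"
          using x[of j] by (intro ln_add_one_self_le_self) auto
        have "(c * G j / real m)^2 \<le> (c * K / real m)^2"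
          using x[of j] by (intro power_mono) auto
        then show ?thesis using a b by linarith
      qed
      have "D m = (\<Sum>j<m. ln (1 + c * G j / real m) - c * G j / real m)"
        unfolding D_def by (simp add: sum_subtractf sum_divide_distrib sum_distrib_left)
      then have "norm (D m) \<le> (\<Sum>j<m. \<bar>ln (1 + c * G j / real m) - c * G j / real m\<bar>)"
        by (simp add: sum_abs)
      also have "\<dots> \<le> (\<Sum>j<m. (c * K / real m)^2)"
        by (intro sum_mono bd)
      also have "\<dots> = (c * K)^2 / real m"
        using m by (simp add: power2_eq_square)
      finally show ?case .
    qed
  qed
  then have "(\<lambda>m. D m + c * ((\<Sum>j<m. G j) / real m)) \<longlonglongrightarrow> 0 + c * \<mu>"
    by (intro tendsto_add tendsto_mult tendsto_const lim)
  then show ?thesis by (simp add: D_def)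
qed

theorem theorem3:
  fixes M :: "'a measure" and q :: "'a \<Rightarrow> real" and f :: "'t \<Rightarrow> 'a \<Rightarrow> real"
    and \<theta> :: 't and \<nu> :: real and n :: nat and y :: "nat \<Rightarrow> 'a"
    and P :: "'w measure" and r :: "nat \<Rightarrow> 'w \<Rightarrow> 'a" and C :: "'t \<Rightarrow> real"
  assumes q_meas: "q \<in> borel_measurable M"
    and q_nonneg: "\<forall>x\<in>space M. q x \<ge> 0"
    and q_dens: "(\<integral>\<^sup>+ x. ennreal (q x) \<partial>M) = 1"
    and f_meas: "f \<theta> \<in> borel_measurable M"
    and q_pos: "\<forall>x\<in>space M. q x > 0"
    and bound: "\<forall>x\<in>space M. f \<theta> x - ln (q x) \<le> C \<theta>"
    and data: "\<forall>i<n. y i \<in> space M"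
    and P: "prob_space P"
    and indep: "prob_space.indep_vars P (\<lambda>_. M) r UNIV"
    and distr: "\<forall>j. distributed P M (r j) (\<lambda>x. ennreal (q x))"
  shows "AE \<omega> in P.
     (\<lambda>m. nce_R (f \<theta>) q \<nu> n y m (\<lambda>j. r j \<omega>) + real n * ln (real m / real n)
           + (\<Sum>i<n. ln (q (y i))))
     \<longlonglongrightarrow> mle_M M (f \<theta>) \<nu> n y"
proof -
  interpret prob_space P by (rule P)
  define g where "g x = exp (f \<theta> x + \<nu>) / q x" for x
  define K where "K = exp (C \<theta> + \<nu>)"
  have K: "K > 0" by (simp add: K_def)
  have g_bnd: "0 \<le> g x \<and> g x \<le> K" if x: "x \<in> space M" for x
  proof -
    have qx: "q x > 0" using q_pos x by auto
    have "f \<theta> x \<le> C \<theta> + ln (q x)" using bound x by auto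
    then have "exp (f \<theta> x + \<nu>) \<le> exp (C \<theta> + ln (q x) + \<nu>)" by simp
    also have "\<dots> = K * q x" using qx by (simp add: K_def exp_add)
    finally show ?thesis using qx by (simp add: g_def divide_le_eq)
  qed
  have g_meas[measurable]: "g \<in> borel_measurable M"
    unfolding g_def using q_meas f_meas by measurable
  have r_meas[measurable]: "r j \<in> P \<rightarrow>\<^sub>M M" for j
    using distr distributed_measurable by blast
  define X where "X j \<omega> = g (r j \<omega>)" for j \<omega>
  have indX: "indep_vars (\<lambda>_. borel) X UNIV"
    unfolding X_def by (rule indep_vars_compose2[OF indep]) simp
  have bndX: "X j \<omega> \<in> {0..K}" if "\<omega> \<in> space P" for j \<omega>
    using g_bnd[of "r j \<omega>"] measurable_space[OF r_meas that] by (auto simp: X_def)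
  define \<mu> where "\<mu> = (\<integral>x. exp (f \<theta> x + \<nu>) \<partial>M)"
  have exX: "expectation (X j) = \<mu>" for j
  proof -
    have "(\<integral>x. q x * g x \<partial>M) = expectation (X j)"
      unfolding X_def using distr q_nonneg by (intro distributed_integral) auto
    moreover have "(\<integral>x. q x * g x \<partial>M) = \<mu>"
      unfolding \<mu>_def using q_pos by (intro Bochner_Integration.integral_cong refl) (auto simp: g_def)
    ultimately show ?thesis by simp
  qed
  have slln: "AE \<omega> in P. (\<lambda>m. (\<Sum>j<m. X j \<omega>) / real m) \<longlonglongrightarrow> \<mu>"
    by (rule slln_bounded[OF P indX bndX K exX])
  show ?thesis
  proof (rule AE_mp[OF slln], intro AE_I2 impI)
    fix \<omega> assume \<omega>: "\<omega> \<in> space P" and L: "(\<lambda>m. (\<Sum>j<m. X j \<omega>) / real m) \<longlonglongrightarrow> \<mu>"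
    have rin: "r j \<omega> \<in> space M" for j using measurable_space[OF r_meas \<omega>] .
    have L2: "(\<lambda>m. \<Sum>j<m. ln (1 + real n * X j \<omega> / real m)) \<longlonglongrightarrow> real n * \<mu>"
      by (rule det_ln_sum[OF _ _ _ L, of K]) (use bndX[OF \<omega>] in auto)
    have L1: "(\<lambda>m. \<Sum>i<n. ln (1 + real n * g (y i) / real m)) \<longlonglongrightarrow> (\<Sum>i<n. 0)"
      by (intro tendsto_sum) real_asymp
    define E where "E m = (\<Sum>i<n. f \<theta> (y i) + \<nu>) - (\<Sum>i<n. ln (1 + real n * g (y i) / real m))
        - (\<Sum>j<m. ln (1 + real n * X j \<omega> / real m))" for m
    have "E \<longlonglongrightarrow> (\<Sum>i<n. f \<theta> (y i) + \<nu>) - (\<Sum>i<n. 0) - real n * \<mu>"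
      unfolding E_def by (intro tendsto_diff tendsto_const L1 L2)
    then have LE: "E \<longlonglongrightarrow> mle_M M (f \<theta>) \<nu> n y"
      by (simp add: mle_M_def \<mu>_def)
    have eq: "nce_R (f \<theta>) q \<nu> n y m (\<lambda>j. r j \<omega>) + real n * ln (real m / real n)
           + (\<Sum>i<n. ln (q (y i))) = E m" if m: "m > 0" for m
    proof -
      have ei: "ln (real n * exp (f \<theta> (y i) + \<nu>) / (real n * exp (f \<theta> (y i) + \<nu>) + real m * q (y i)))
          + ln (real m / real n) + ln (q (y i)) = (f \<theta> (y i) + \<nu>) - ln (1 + real n * g (y i) / real m)"
        if i: "i < n" for i
      proof -
        have qy: "q (y i) > 0" using q_pos data i by auto
        have n: "real n > 0" using i by simp
        have mm: "real m > 0" using m by simp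
        define e where "e = exp (f \<theta> (y i) + \<nu>)"
        have e: "e > 0" by (simp add: e_def)
        have pos: "real n * e + real m * q (y i) > 0" using n mm e qy by (intro add_pos_pos) auto
        have "1 + real n * g (y i) / real m = (real n * e + real m * q (y i)) / (real m * q (y i))"
          using qy mm by (simp add: g_def e_def field_simps)
        then have "ln (1 + real n * g (y i) / real m) = ln (real n * e + real m * q (y i)) - ln (real m) - ln (q (y i))"
          using qy mm n e pos by (simp add: ln_div ln_mult)
        moreover have "ln (real n * e / (real n * e + real m * q (y i))) = ln (real n) + (f \<theta> (y i) + \<nu>) - ln (real n * e + real m * q (y i))"
          using qy mm n e pos by (simp add: ln_div ln_mult e_def)
        moreover have "ln (real m / real n) = ln (real m) - ln (real n)"
          using mm n by (simp add: ln_div)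
        ultimately show ?thesis by (simp add: e_def)
      qed
      have ej: "ln (real m * q (r j \<omega>) / (real n * exp (f \<theta> (r j \<omega>) + \<nu>) + real m * q (r j \<omega>)))
          = - ln (1 + real n * X j \<omega> / real m)" for j
      proof -
        have qy: "q (r j \<omega>) > 0" using q_pos rin by auto
        have mm: "real m > 0" using m by simp
        define e where "e = exp (f \<theta> (r j \<omega>) + \<nu>)"
        have e: "e > 0" by (simp add: e_def)
        have "1 + real n * X j \<omega> / real m = inverse (real m * q (r j \<omega>) / (real n * e + real m * q (r j \<omega>)))"
          using qy mm e by (simp add: X_def g_def e_def field_simps)
        then have "ln (1 + real n * X j \<omega> / real m) = - ln (real m * q (r j \<omega>) / (real n * e + real m * q (r j \<omega>)))"
          using qy mm e by (simp add: ln_div add_pos_nonneg)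
        then show ?thesis by (simp add: e_def)
      qed
      have "real n * ln (real m / real n) = (\<Sum>i<n. ln (real m / real n))" by simp
      then have "nce_R (f \<theta>) q \<nu> n y m (\<lambda>j. r j \<omega>) + real n * ln (real m / real n)
           + (\<Sum>i<n. ln (q (y i)))
         = (\<Sum>i<n. ln (real n * exp (f \<theta> (y i) + \<nu>) / (real n * exp (f \<theta> (y i) + \<nu>) + real m * q (y i)))
          + ln (real m / real n) + ln (q (y i)))
          + (\<Sum>j<m. ln (real m * q (r j \<omega>) / (real n * exp (f \<theta> (r j \<omega>) + \<nu>) + real m * q (r j \<omega>))))"
        by (simp add: nce_R_def sum.distrib)
      also have "\<dots> = (\<Sum>i<n. (f \<theta> (y i) + \<nu>) - ln (1 + real n * g (y i) / real m))
          + (\<Sum>j<m. - ln (1 + real n * X j \<omega> / real m))"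
        using ei ej by (intro arg_cong2[where f="(+)"] sum.cong) auto
      also have "\<dots> = E m" by (simp add: E_def sum_subtractf sum_negf)
      finally show ?thesis .
    qed
    show "(\<lambda>m. nce_R (f \<theta>) q \<nu> n y m (\<lambda>j. r j \<omega>) + real n * ln (real m / real n)
           + (\<Sum>i<n. ln (q (y i)))) \<longlonglongrightarrow> mle_M M (f \<theta>) \<nu> n y"
      by (rule Lim_transform_eventually[OF LE])
        (use eventually_gt_at_top[of 0] in \<open>eventually_elim, use eq in auto\<close>)
  qed
qed

end
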